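(* Let $n\ge1$ and let $\mathcal{S}$ be a discrete subgroup of $O(n+1)$ satisfying the spanning property. Any maximizer over $\mathcal{K}_0(\mathcal{S})$ (with positive volume) of the functional $$\mathcal{F}_{-\infty}(\Omega)=V(\Omega)\Big/\big(\min_{\mathbb{S}^n}h_\Omega\big)^{n+1}$$ is an $\mathcal{S}$-invariant polytope.
   Context: $\mathcal{K}_0(\mathcal{S})$ is the set of convex bodies in $\mathbb{R}^{n+1}$ containing the origin and invariant under all $\phi\in\mathcal{S}$; $h_\Omega$ is the support function; $V(\Omega)=(n+1)|\Omega|$. Spanning property: for every $a\in\mathbb{S}^n$, $\mathrm{conv}\{\phi(a):\phi\in\mathcal{S}\}$ is a non-degenerate $(n+1)$-dimensional polytope. *)

theory Defs
  imports "HOL-Analysis.Analysis"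
begin

text \<open>Ambient space R^(n+1) is real^'n with CARD('n) = n+1.
  Orthogonal maps are represented by orthogonal matrices acting via *v.\<close>

definition orth_subgroup :: "(real^'n^'n) set \<Rightarrow> bool" where
  "orth_subgroup S \<longleftrightarrow> S \<subseteq> {A. orthogonal_matrix A} \<and> mat 1 \<in> S \<and>
     (\<forall>A\<in>S. \<forall>B\<in>S. A ** B \<in> S) \<and> (\<forall>A\<in>S. matrix_inv A \<in> S)"

definition discrete_set :: "(real^'n^'n) set \<Rightarrow> bool" where
  "discrete_set S \<longleftrightarrow> (\<forall>A\<in>S. \<exists>e>0. \<forall>B\<in>S. norm (B - A) < e \<longrightarrow> B = A)"

definition spanning_property :: "(real^'n^'n) set \<Rightarrow> bool" where
  "spanning_property S \<longleftrightarrow> (\<forall>a \<in> sphere (0::real^'n) 1.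
      polytope (convex hull ((\<lambda>A. A *v a) ` S)) \<and>
      aff_dim (convex hull ((\<lambda>A. A *v a) ` S)) = int CARD('n))"

definition convex_body :: "(real^'n) set \<Rightarrow> bool" where
  "convex_body K \<longleftrightarrow> compact K \<and> convex K \<and> K \<noteq> {}"

definition K0 :: "(real^'n^'n) set \<Rightarrow> (real^'n) set set" where
  "K0 S = {K. convex_body K \<and> 0 \<in> K \<and> (\<forall>A\<in>S. (\<lambda>x. A *v x) ` K = K)}"

definition support_fn :: "(real^'n) set \<Rightarrow> real^'n \<Rightarrow> real" where
  "support_fn K u = (SUP x\<in>K. x \<bullet> u)"

definition vol_V :: "(real^'n) set \<Rightarrow> real" where
  "vol_V K = real CARD('n) * measure lebesgue K"

definition F_minus_inf :: "(real^'n) set \<Rightarrow> real" where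
  "F_minus_inf K = vol_V K / (INF u\<in>sphere 0 1. support_fn K u) ^ CARD('n)"

end

theory Submission
  imports Defs
begin


lemma orth_inv:
  fixes A :: "real^'n^'n"
  assumes "orthogonal_matrix A"
  shows "A ** matrix_inv A = mat 1 \<and> matrix_inv A ** A = mat 1"
  unfolding matrix_inv_def
  by (rule someI[of _ "transpose A"]) (use assms in \<open>auto simp: orthogonal_matrix_def\<close>)

lemma orth_inner:
  fixes A :: "real^'n^'n"
  assumes "orthogonal_matrix A"
  shows "(A *v x) \<bullet> (A *v y) = x \<bullet> y"
proof -
  have "orthogonal_transformation ((*v) A)"
    using assms by (simp add: orthogonal_transformation_matrix matrix_of_matrix_vector_mul)
  then show ?thesis by (simp add: orthogonal_transformation_def)
qed

lemma orth_adj: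
  fixes A :: "real^'n^'n"
  assumes "orthogonal_matrix A"
  shows "x \<bullet> (A *v y) = (matrix_inv A *v x) \<bullet> y"
proof -
  have "x = A *v (matrix_inv A *v x)"
    using orth_inv[OF assms] by (simp add: matrix_vector_mul_assoc)
  then have "x \<bullet> (A *v y) = (A *v (matrix_inv A *v x)) \<bullet> (A *v y)" by simp
  also have "\<dots> = (matrix_inv A *v x) \<bullet> y" by (rule orth_inner[OF assms])
  finally show ?thesis .
qed

lemma orth_norm:
  fixes A :: "real^'n^'n"
  assumes "orthogonal_matrix A"
  shows "norm (A *v x) = norm x"
  using orth_inner[OF assms, of x x] by (simp add: norm_eq_sqrt_inner)

lemma sphere_extreme:
  fixes a :: "'a::euclidean_space"
  assumes "a \<in> C" "C \<subseteq> cball 0 1" "norm a = 1"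
  shows "a extreme_point_of C"
  unfolding extreme_point_of_def
proof (intro conjI ballI notI)
  show "a \<in> C" by fact
  fix p q assume p: "p \<in> C" and q: "q \<in> C" and a: "a \<in> open_segment p q"
  have ne: "a \<noteq> p" using a by (auto simp: open_segment_def)
  from a obtain u where u: "0 < u" "u < 1" "a = (1 - u) *\<^sub>R p + u *\<^sub>R q"
    unfolding in_segment(2) by blast
  have np: "norm p \<le> 1" and nq: "norm q \<le> 1" using p q assms(2) by auto
  have pa: "p \<bullet> a \<le> 1" using norm_cauchy_schwarz[of p a] np assms(3) by auto
  have qa: "q \<bullet> a \<le> 1" using norm_cauchy_schwarz[of q a] nq assms(3) by auto
  have "1 = a \<bullet> a" using assms(3) by (simp add: dot_square_norm)
  also have "\<dots> = (1 - u) * (p \<bullet> a) + u * (q \<bullet> a)" using u(3)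
    by (simp add: inner_add_left)
  finally have "1 = (1 - u) * (p \<bullet> a) + u * (q \<bullet> a)" .
  moreover have "u * (q \<bullet> a) \<le> u" using mult_left_mono[OF qa, of u] u by simp
  ultimately have "1 - u \<le> (1 - u) * (p \<bullet> a)" by linarith
  then have "(1 - u) * 1 \<le> (1 - u) * (p \<bullet> a)" by simp
  then have "1 \<le> p \<bullet> a" using u by (subst (asm) mult_le_cancel_left) auto
  then have pa1: "p \<bullet> a = 1" using pa by linarith
  have "(norm (p - a))\<^sup>2 = p \<bullet> p - 2 * (p \<bullet> a) + a \<bullet> a"
    by (simp add: power2_norm_eq_inner inner_diff_left inner_diff_right inner_commute)
  also have "\<dots> \<le> 0" using pa1 np assms(3)
    by (simp add: dot_square_norm) (smt (verit) norm_ge_zero power_le_one)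
  finally have "p = a" by simp
  then show False using ne by simp
qed

theorem theorem4p2:
  fixes S :: "(real^'n^'n) set" and \<Omega> :: "(real^'n) set"
  assumes "CARD('n) \<ge> 2"
    and "orth_subgroup S" and "discrete_set S" and "spanning_property S"
    and "\<Omega> \<in> K0 S" and "measure lebesgue \<Omega> > 0"
    and "\<forall>K\<in>K0 S. measure lebesgue K > 0 \<longrightarrow> F_minus_inf K \<le> F_minus_inf \<Omega>"
  shows "polytope \<Omega> \<and> (\<forall>A\<in>S. (\<lambda>x. A *v x) ` \<Omega> = \<Omega>)"
proof -
  have orthS: "\<And>A. A \<in> S \<Longrightarrow> orthogonal_matrix A" and idS: "mat 1 \<in> S"
    and mulS: "\<And>A B. A \<in> S \<Longrightarrow> B \<in> S \<Longrightarrow> A ** B \<in> S"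
    and invS: "\<And>A. A \<in> S \<Longrightarrow> matrix_inv A \<in> S"
    using assms(2) unfolding orth_subgroup_def by auto
  have cpt: "compact \<Omega>" and cvx: "convex \<Omega>" and ne: "\<Omega> \<noteq> {}" and O0: "0 \<in> \<Omega>"
    and invO: "\<And>A. A \<in> S \<Longrightarrow> (\<lambda>x. A *v x) ` \<Omega> = \<Omega>"
    using assms(5) unfolding K0_def convex_body_def by auto
  have memA: "\<And>A x. A \<in> S \<Longrightarrow> x \<in> \<Omega> \<Longrightarrow> A *v x \<in> \<Omega>" using invO by blast
  obtain R where R: "\<And>x. x \<in> \<Omega> \<Longrightarrow> norm x \<le> R" and Rpos: "R > 0"
    using compact_imp_bounded[OF cpt] unfolding bounded_pos by blast
  define h where "h = support_fn \<Omega>"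
  have bdd: "bdd_above ((\<lambda>x. x \<bullet> u) ` \<Omega>)" for u
  proof (rule bdd_aboveI2[where M="R * norm u"])
    fix x assume "x \<in> \<Omega>"
    have "x \<bullet> u \<le> norm x * norm u" by (rule norm_cauchy_schwarz)
    also have "\<dots> \<le> R * norm u" using R[OF \<open>x \<in> \<Omega>\<close>] by (simp add: mult_right_mono)
    finally show "x \<bullet> u \<le> R * norm u" .
  qed
  have hupper: "\<And>x u. x \<in> \<Omega> \<Longrightarrow> x \<bullet> u \<le> h u"
    unfolding h_def support_fn_def by (rule cSUP_upper[OF _ bdd])
  have hleast: "\<And>u c. (\<And>x. x \<in> \<Omega> \<Longrightarrow> x \<bullet> u \<le> c) \<Longrightarrow> h u \<le> c"
    unfolding h_def support_fn_def using ne by (rule cSUP_least) 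
  have h0: "\<And>u. 0 \<le> h u" using hupper[OF O0] by simp
  have hlip1: "h u \<le> h v + R * norm (u - v)" for u v
  proof (rule hleast)
    fix x assume x: "x \<in> \<Omega>"
    have "x \<bullet> u = x \<bullet> v + x \<bullet> (u - v)" by (simp add: inner_diff_right)
    also have "x \<bullet> (u - v) \<le> norm x * norm (u - v)" by (rule norm_cauchy_schwarz)
    also have "\<dots> \<le> R * norm (u - v)" using R[OF x] by (simp add: mult_right_mono)
    finally show "x \<bullet> u \<le> h v + R * norm (u - v)" using hupper[OF x, of v] by linarith
  qed
  have "R-lipschitz_on (sphere 0 1) h"
  proof (rule lipschitz_onI)
    fix u v :: "real^'n"
    show "dist (h u) (h v) \<le> R * dist u v"
      using hlip1[of u v] hlip1[of v u] by (simp add: dist_real_def dist_norm norm_minus_commute abs_le_iff)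
  qed (use Rpos in auto)
  then have hcont: "continuous_on (sphere 0 1) h" by (rule lipschitz_on_continuous_on)
  obtain e1 :: "real^'n" where "norm e1 = 1" using vector_choose_size[of 1] by auto
  then have sne: "sphere (0::real^'n) 1 \<noteq> {}" by auto
  obtain u0 where u0: "u0 \<in> sphere 0 1" and u0min: "\<And>u. u \<in> sphere 0 1 \<Longrightarrow> h u0 \<le> h u"
    using continuous_attains_inf[OF compact_sphere sne hcont] by blast
  define r where "r = h u0"
  have r0: "0 \<le> r" using h0 r_def by simp
  have INFO: "(INF u\<in>sphere 0 1. support_fn \<Omega> u) = r"
  proof (rule antisym)
    show "(INF u\<in>sphere 0 1. support_fn \<Omega> u) \<le> r"
      unfolding r_def h_def by (rule cINF_lower[OF _ u0]) (use h0 h_def in \<open>auto intro: bdd_belowI2[where m=0]\<close>)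
    show "r \<le> (INF u\<in>sphere 0 1. support_fn \<Omega> u)"
      using sne u0min unfolding r_def h_def by (auto intro: cINF_greatest)
  qed
  define Orb where "Orb = (\<lambda>A. A *v u0) ` S"
  have Osph: "Orb \<subseteq> sphere 0 1" using u0 unfolding Orb_def by (auto simp: orth_norm[OF orthS])
  have Ohull: "convex hull Orb \<subseteq> cball 0 1"
    by (rule hull_minimal) (use Osph in auto)
  have polyO: "polytope (convex hull Orb)" and affO: "aff_dim (convex hull Orb) = int CARD('n)"
    using assms(4) u0 unfolding spanning_property_def Orb_def by auto
  have finO: "finite Orb"
  proof -
    obtain V where V: "finite V" "convex hull Orb = convex hull V"
      using polyO unfolding polytope_def by auto
    have "Orb \<subseteq> V"
    proof
      fix b assume b: "b \<in> Orb"
      have "b extreme_point_of (convex hull Orb)"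
        by (rule sphere_extreme) (use b hull_inc[of b Orb convex] Ohull Osph in auto)
      then show "b \<in> V" using V(2) extreme_point_of_convex_hull by metis
    qed
    then show ?thesis using V(1) finite_subset by auto
  qed
  have OA: "(\<lambda>b. A *v b) ` Orb = Orb" if A: "A \<in> S" for A
  proof
    show "(\<lambda>b. A *v b) ` Orb \<subseteq> Orb"
      unfolding Orb_def using mulS[OF A] by (auto simp: matrix_vector_mul_assoc)
    show "Orb \<subseteq> (\<lambda>b. A *v b) ` Orb"
    proof
      fix b assume "b \<in> Orb"
      then obtain B where B: "B \<in> S" "b = B *v u0" unfolding Orb_def by auto
      have "b = A *v ((matrix_inv A ** B) *v u0)"
        using B orth_inv[OF orthS[OF A]] by (simp add: matrix_vector_mul_assoc matrix_mul_assoc)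
      moreover have "(matrix_inv A ** B) *v u0 \<in> Orb"
        unfolding Orb_def using mulS[OF invS[OF A] B(1)] by auto
      ultimately show "b \<in> (\<lambda>b. A *v b) ` Orb" by blast
    qed
  qed
  have sum0: "\<Sum>Orb = 0"
  proof (rule ccontr)
    assume c0: "\<Sum>Orb \<noteq> 0"
    define c where "c = \<Sum>Orb"
    have fix_c: "A *v c = c" if A: "A \<in> S" for A
    proof -
      have inj: "inj ((*v) A)"
        by (rule inj_matrix_vector_mult) (use orth_inv[OF orthS[OF A]] in \<open>auto simp: invertible_def\<close>)
      have "A *v c = (\<Sum>b\<in>Orb. A *v b)"
        unfolding c_def by (simp add: linear_sum[OF matrix_vector_mul_linear])
      also have "\<dots> = \<Sum>((\<lambda>b. A *v b) ` Orb)"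
        by (rule sum.reindex[symmetric, unfolded comp_def]) (use inj in \<open>auto intro: inj_on_subset\<close>)
      also have "\<dots> = c" using OA[OF A] c_def by simp
      finally show ?thesis .
    qed
    define a where "a = (1 / norm c) *\<^sub>R c"
    have a1: "a \<in> sphere 0 1" using c0 c_def unfolding a_def by auto
    have "(\<lambda>A. A *v a) ` S = {a}"
      using fix_c idS unfolding a_def by (auto simp: matrix_vector_mult_scaleR)
    then have "aff_dim (convex hull ((\<lambda>A. A *v a) ` S)) = 0" by simp
    moreover have "aff_dim (convex hull ((\<lambda>A. A *v a) ` S)) = int CARD('n)"
      using assms(4) a1 unfolding spanning_property_def by auto
    ultimately show False using assms(1) by simp
  qed
  have spanO: "span Orb = UNIV"
  proof -
    have "aff_dim Orb = DIM(real^'n)" using affO by (simp add: aff_dim_convex_hull)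
    then have "affine hull Orb = UNIV" by (simp only: aff_dim_eq_full)
    then show ?thesis using affine_hull_subset_span[of Orb] by auto
  qed
  have "\<forall>i. \<exists>c. (\<Sum>b\<in>Orb. c b *\<^sub>R b) = axis i (1::real)"
  proof
    fix i :: 'n
    have "axis i (1::real) \<in> span Orb" using spanO by simp
    then show "\<exists>c. (\<Sum>b\<in>Orb. c b *\<^sub>R b) = axis i (1::real)"
      using span_finite[OF finO] by auto
  qed
  then obtain cf where cf: "\<And>i. (\<Sum>b\<in>Orb. cf i b *\<^sub>R b) = axis i (1::real)" by metis
  define P where "P = {x. \<forall>b\<in>Orb. b \<bullet> x \<le> r}"
  have u0O: "u0 \<in> Orb" unfolding Orb_def using idS by force
  have OmP: "\<Omega> \<subseteq> P"
  proof
    fix x assume x: "x \<in> \<Omega>"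
    show "x \<in> P" unfolding P_def mem_Collect_eq
    proof
      fix b assume "b \<in> Orb"
      then obtain A where A: "A \<in> S" "b = A *v u0" unfolding Orb_def by auto
      have "b \<bullet> x = (matrix_inv A *v x) \<bullet> u0"
        using orth_adj[OF orthS[OF A(1)], of x u0] A(2) by (simp add: inner_commute)
      also have "\<dots> \<le> r" unfolding r_def by (rule hupper[OF memA[OF invS[OF A(1)] x]])
      finally show "b \<bullet> x \<le> r" .
    qed
  qed
  have cardO: "card Orb \<ge> 1" using finO u0O by (metis One_nat_def Suc_leI card_gt_0_iff empty_iff)
  have bnd1: "\<bar>b \<bullet> x\<bar> \<le> real (card Orb) * r" if x: "x \<in> P" and b: "b \<in> Orb" for x b
  proof -
    have up: "\<And>b. b \<in> Orb \<Longrightarrow> b \<bullet> x \<le> r" using x unfolding P_def by auto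
    have "0 = (\<Sum>Orb) \<bullet> x" using sum0 by simp
    also have "\<dots> = (\<Sum>b'\<in>Orb. b' \<bullet> x)" by (simp add: inner_sum_left)
    also have "\<dots> = b \<bullet> x + (\<Sum>b'\<in>Orb - {b}. b' \<bullet> x)" by (rule sum.remove[OF finO b])
    also have "(\<Sum>b'\<in>Orb - {b}. b' \<bullet> x) \<le> real (card (Orb - {b})) * r"
      by (rule sum_bounded_above) (use up in auto)
    also have "real (card (Orb - {b})) = real (card Orb) - 1" using finO b cardO by (simp add: of_nat_diff)
    finally have lo: "- ((real (card Orb) - 1) * r) \<le> b \<bullet> x" by linarith
    have "r \<le> real (card Orb) * r" using cardO r0 by (simp add: mult_le_cancel_right1)
    moreover have "(real (card Orb) - 1) * r \<le> real (card Orb) * r" using r0 by (simp add: algebra_simps)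
    ultimately show ?thesis using lo up[OF b] by (simp add: abs_le_iff)
  qed
  define C where "C = (\<Sum>i\<in>UNIV. \<Sum>b\<in>Orb. \<bar>cf i b\<bar>) * real (card Orb)"
  have bnd2: "norm x \<le> C * r" if x: "x \<in> P" for x
  proof -
    have comp: "\<bar>x $ i\<bar> \<le> (\<Sum>b\<in>Orb. \<bar>cf i b\<bar>) * (real (card Orb) * r)" for i
    proof -
      have "x $ i = x \<bullet> axis i 1" by (simp add: inner_axis)
      also have "\<dots> = (\<Sum>b\<in>Orb. cf i b * (b \<bullet> x))"
        unfolding cf[of i, symmetric] by (simp add: inner_sum_right inner_commute)
      finally have "\<bar>x $ i\<bar> \<le> (\<Sum>b\<in>Orb. \<bar>cf i b * (b \<bullet> x)\<bar>)" by simp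
      also have "\<dots> \<le> (\<Sum>b\<in>Orb. \<bar>cf i b\<bar> * (real (card Orb) * r))"
        by (rule sum_mono) (use bnd1[OF x] in \<open>auto simp: abs_mult intro: mult_left_mono\<close>)
      finally show ?thesis by (simp add: sum_distrib_right)
    qed
    have "norm x \<le> (\<Sum>i\<in>UNIV. \<bar>x $ i\<bar>)" by (rule norm_le_l1_cart)
    also have "\<dots> \<le> (\<Sum>i\<in>UNIV. (\<Sum>b\<in>Orb. \<bar>cf i b\<bar>) * (real (card Orb) * r))"
      by (rule sum_mono) (rule comp)
    also have "\<dots> = C * r" unfolding C_def by (simp add: sum_distrib_right mult.assoc)
    finally show ?thesis .
  qed
  have rpos: "r > 0"
  proof (rule ccontr)
    assume "\<not> r > 0"
    then have "r = 0" using r0 by simp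
    then have "\<Omega> \<subseteq> {0}" using OmP bnd2 by fastforce
    then have "negligible \<Omega>" using negligible_subset negligible_sing by metis
    then show False using assms(6) negligible_imp_measure0[of \<Omega>] by linarith
  qed
  have bddP: "bounded P" unfolding bounded_iff using bnd2 by blast
  have Peq: "P = \<Inter>((\<lambda>b. {x. b \<bullet> x \<le> r}) ` Orb)" unfolding P_def by auto
  have polyhP: "polyhedron P" unfolding Peq
    by (rule polyhedron_Inter) (use finO polyhedron_halfspace_le in auto)
  have polyP: "polytope P" using polyhP bddP polytope_eq_bounded_polyhedron by blast
  have cptP: "compact P" and cvxP: "convex P" using polyP polytope_imp_compact polytope_imp_convex by auto
  have Pmem: "A *v x \<in> P" if A: "A \<in> S" and x: "x \<in> P" for A x
    unfolding P_def mem_Collect_eq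
  proof
    fix b assume b: "b \<in> Orb"
    have bb: "b = A *v (matrix_inv A *v b)"
      using orth_inv[OF orthS[OF A]] by (simp add: matrix_vector_mul_assoc)
    have "matrix_inv A *v b \<in> Orb" using OA[OF invS[OF A]] b by blast
    then have "(matrix_inv A *v b) \<bullet> x \<le> r" using x unfolding P_def by auto
    moreover have "b \<bullet> (A *v x) = (matrix_inv A *v b) \<bullet> x"
      by (subst bb) (rule orth_inner[OF orthS[OF A]])
    ultimately show "b \<bullet> (A *v x) \<le> r" by simp
  qed
  have invP: "(\<lambda>x. A *v x) ` P = P" if A: "A \<in> S" for A
  proof
    show "(\<lambda>x. A *v x) ` P \<subseteq> P" using Pmem[OF A] by auto
    show "P \<subseteq> (\<lambda>x. A *v x) ` P"
    proof
      fix x assume x: "x \<in> P"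
      have "x = A *v (matrix_inv A *v x)"
        using orth_inv[OF orthS[OF A]] by (simp add: matrix_vector_mul_assoc)
      then show "x \<in> (\<lambda>x. A *v x) ` P" using Pmem[OF invS[OF A] x] by blast
    qed
  qed
  have PK0: "P \<in> K0 S"
    unfolding K0_def convex_body_def using cptP cvxP OmP O0 invP by auto
  have lmO: "\<Omega> \<in> lmeasurable" and lmP: "P \<in> lmeasurable"
    using cpt cptP lmeasurable_compact by auto
  have mOP: "measure lebesgue \<Omega> \<le> measure lebesgue P"
    by (rule measure_mono_fmeasurable[OF OmP]) (use lmO lmP in \<open>auto simp: fmeasurableD\<close>)
  have mP: "measure lebesgue P > 0" using mOP assms(6) by linarith
  have bddPu: "bdd_above ((\<lambda>x. x \<bullet> u) ` P)" for u
  proof -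
    obtain M where "\<forall>x\<in>P. norm x \<le> M" using bddP bounded_iff by blast
    then show ?thesis
      by (intro bdd_aboveI2[where M="M * norm u"])
         (meson norm_cauchy_schwarz order_trans mult_right_mono norm_ge_zero)
  qed
  have INFP: "(INF u\<in>sphere 0 1. support_fn P u) = r"
  proof (rule antisym)
    have "support_fn P u0 \<le> r" unfolding support_fn_def
    proof (rule cSUP_least)
      show "P \<noteq> {}" using OmP ne by blast
      fix x assume "x \<in> P"
      then show "x \<bullet> u0 \<le> r" using u0O unfolding P_def by (auto simp: inner_commute)
    qed
    moreover have "(INF u\<in>sphere 0 1. support_fn P u) \<le> support_fn P u0"
    proof (rule cINF_lower[OF _ u0])
      have "support_fn P u \<ge> h u" for u
        unfolding h_def support_fn_def by (rule cSUP_subset_mono[OF ne bddPu OmP]) simp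
      then show "bdd_below (support_fn P ` sphere 0 1)" using h0 by (intro bdd_belowI2[where m=0]) (meson order_trans)
    qed
    ultimately show "(INF u\<in>sphere 0 1. support_fn P u) \<le> r" by simp
    show "r \<le> (INF u\<in>sphere 0 1. support_fn P u)"
    proof (rule cINF_greatest[OF sne])
      fix u assume u: "u \<in> sphere (0::real^'n) 1"
      have "h u \<le> support_fn P u"
        unfolding h_def support_fn_def by (rule cSUP_subset_mono[OF ne bddPu OmP]) simp
      then show "r \<le> support_fn P u" using u0min[OF u] r_def by simp
    qed
  qed
  have "F_minus_inf P \<le> F_minus_inf \<Omega>" using assms(7) PK0 mP by blast
  then have "vol_V P / r ^ CARD('n) \<le> vol_V \<Omega> / r ^ CARD('n)"
    unfolding F_minus_inf_def INFP INFO .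
  then have "vol_V P \<le> vol_V \<Omega>" using rpos by (simp add: divide_le_cancel)
  then have mPO: "measure lebesgue P \<le> measure lebesgue \<Omega>" unfolding vol_V_def by simp
  have negD: "negligible (P - \<Omega>)"
  proof -
    have "measure lebesgue (P - \<Omega>) = measure lebesgue P - measure lebesgue \<Omega>"
      by (rule measure_Diff) (use lmO lmP OmP in \<open>auto simp: fmeasurable_def\<close>)
    then have "measure lebesgue (P - \<Omega>) = 0" using mOP mPO by simp
    moreover have "P - \<Omega> \<in> lmeasurable" using fmeasurable_Diff[OF lmP fmeasurableD[OF lmO]] .
    ultimately show ?thesis using negligible_iff_measure by blast
  qed
  have PO: "P = \<Omega>"
  proof (rule ccontr)
    assume "P \<noteq> \<Omega>"
    then obtain x where x: "x \<in> P" "x \<notin> \<Omega>" using OmP by blast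
    have "open (- \<Omega>)" using compact_imp_closed[OF cpt] by (simp add: open_Compl)
    then obtain e where e: "e > 0" "ball x e \<subseteq> - \<Omega>" using x(2) open_contains_ball by blast
    have "\<not> negligible \<Omega>" using assms(6) negligible_imp_measure0[of \<Omega>] by auto
    then have "interior \<Omega> \<noteq> {}" using negligible_convex_interior[OF cvx] by blast
    then obtain c where c: "c \<in> interior \<Omega>" by blast
    then have cP: "c \<in> interior P" using interior_mono[OF OmP] by blast
    define t where "t = min 1 (e / 2 / (norm (x - c) + 1))"
    have "0 < norm (x - c) + 1" by (simp add: add_nonneg_pos)
    then have "0 < e / 2 / (norm (x - c) + 1)" using e by simp
    then have t0: "0 < t" "t \<le> 1" unfolding t_def by auto
    define y where "y = x - t *\<^sub>R (x - c)"
    have yP: "y \<in> interior P" unfolding y_def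
      by (rule mem_interior_closure_convex_shrink[OF cvxP cP _ t0]) (use x closure_subset in blast)
    have "t * norm (x - c) \<le> e / 2 / (norm (x - c) + 1) * norm (x - c)"
      unfolding t_def by (intro mult_right_mono) auto
    also have "\<dots> < e / 2"
    proof -
      have "norm (x - c) / (norm (x - c) + 1) < 1"
        using \<open>0 < norm (x - c) + 1\<close> by (simp add: divide_less_eq)
      then have "e / 2 * (norm (x - c) / (norm (x - c) + 1)) < e / 2 * 1"
        using e by (intro mult_strict_left_mono) auto
      then show ?thesis by simp
    qed
    finally have dxy: "dist x y < e / 2" unfolding y_def using t0 by (simp add: dist_norm)
    obtain d where d: "d > 0" "ball y d \<subseteq> P" using yP by (meson open_contains_ball open_interior interior_subset subset_trans)
    define d' where "d' = min d (e / 2)"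
    have "ball y d' \<subseteq> P - \<Omega>"
    proof
      fix z assume z: "z \<in> ball y d'"
      then have "z \<in> P" using d unfolding d'_def by auto
      moreover have "dist x z < e" using z dxy dist_triangle[of x z y] unfolding d'_def
        by (auto simp: dist_commute)
      then have "z \<notin> \<Omega>" using e by auto
      ultimately show "z \<in> P - \<Omega>" by blast
    qed
    then have "negligible (ball y d')" using negD negligible_subset by blast
    moreover have "d' > 0" using d e unfolding d'_def by auto
    ultimately show False using open_not_negligible[of "ball y d'"] by auto
  qed
  show ?thesis using polyP PO invO by auto
qed

end
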